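(* Let $m\ge 0$ and $Z\ge 1$ be integers and let $\gamma,\kappa\ge 2$ be integers with $\gamma\kappa>\gamma+\kappa$. Consider pairs $(\mathbf P,\mathbf L)$ with $\mathbf P\in\{0,\ldots,m\}^{\gamma\times\kappa}$ and $\mathbf L\in\mathbb{Z}_Z^{\gamma\times\kappa}$. For $1\le i_1<i_2\le\gamma$ and $1\le j_1<j_2\le\kappa$, call the 4-cycle candidate $(i_1,i_2,j_1,j_2)$ active under $(\mathbf P,\mathbf L)$ if both $$\mathbf P(i_1,j_1)+\mathbf P(i_2,j_2)=\mathbf P(i_1,j_2)+\mathbf P(i_2,j_1)$$ and $$\mathbf L(i_1,j_1)+\mathbf L(i_2,j_2)\equiv\mathbf L(i_1,j_2)+\mathbf L(i_2,j_1)\pmod Z.$$ Let $N$ be the number of pairs $(\mathbf P,\mathbf L)$ under which no 4-cycle candidate is active. Let $\Delta=(2\gamma-3)(2\kappa-3)$, $I=\frac{(\Delta-1)^{\Delta-1}}{\Delta^{\Delta}}$ and $II=\frac{27}{256(\gamma\kappa-\gamma-\kappa)}$. If $$\frac{2m^2+4m+3}{3(m+1)^3Z}\le\max\{I,II\},$$ then $$N\ \ge\ [Z(m+1)]^{\gamma\kappa}\times\begin{cases}\left(1-\frac{2}{\Delta}\right)^{\binom{\gamma}{2}\binom{\kappa}{2}}, & \text{if } I>II,\\[2pt] \left(1-\frac{\gamma\kappa-\gamma-\kappa+1}{4(\gamma\kappa-\gamma-\kappa)}\right)^{\gamma\kappa}, & \text{otherwise.}\end{cases}$$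
   Context: This is the setting of uniform edge spreading (each entry of the partition matrix $\mathbf P$ uniform on $\{0,\ldots,m\}$, $m$ the coupling memory) and uniform lifting (each lifting shift uniform on $\mathbb{Z}_Z$) for a QC-SC-LDPC code from the all-ones $\gamma\times\kappa$ base matrix; the displayed activation conditions are the conditions for a base-graph 4-cycle to survive edge spreading and $Z$-lifting. *)

theory Defs
  imports "HOL-Library.FuncSet" Complex_Main
begin

text \<open>Indices are 0-based: rows i < gamma, columns j < kappa.
  A partition matrix P and a lifting matrix L are functions on
  {..<gamma} \<times> {..<kappa} (extensional, PiE), with entries in {0..m}
  resp. {0..<Z} (representatives of Z_Z).\<close>

definition active4 :: "nat \<Rightarrow> (nat \<times> nat \<Rightarrow> nat) \<Rightarrow> (nat \<times> nat \<Rightarrow> nat)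
    \<Rightarrow> nat \<Rightarrow> nat \<Rightarrow> nat \<Rightarrow> nat \<Rightarrow> bool" where
  "active4 Z P L i1 i2 j1 j2 \<longleftrightarrow>
     P (i1, j1) + P (i2, j2) = P (i1, j2) + P (i2, j1) \<and>
     (L (i1, j1) + L (i2, j2)) mod Z = (L (i1, j2) + L (i2, j1)) mod Z"

definition good_pairs :: "nat \<Rightarrow> nat \<Rightarrow> nat \<Rightarrow> nat
    \<Rightarrow> ((nat \<times> nat \<Rightarrow> nat) \<times> (nat \<times> nat \<Rightarrow> nat)) set" where
  "good_pairs m Z gamma kappa =
     {(P, L). P \<in> ({..<gamma} \<times> {..<kappa}) \<rightarrow>\<^sub>E {0..m} \<and>
              L \<in> ({..<gamma} \<times> {..<kappa}) \<rightarrow>\<^sub>E {..<Z} \<and>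
              (\<forall>i1 i2 j1 j2. i1 < i2 \<and> i2 < gamma \<and> j1 < j2 \<and> j2 < kappa
                 \<longrightarrow> \<not> active4 Z P L i1 i2 j1 j2)}"

end

theory Submission
  imports Defs
begin


definition Cr :: "nat \<Rightarrow> nat \<Rightarrow> (nat \<times> nat) set" where
  "Cr kappa r = {(i,j). j < kappa \<and> i*kappa + j < r}"

definition G :: "nat \<Rightarrow> nat \<Rightarrow> nat \<Rightarrow> nat \<Rightarrow> ((nat \<times> nat \<Rightarrow> nat) \<times> (nat \<times> nat \<Rightarrow> nat)) set" where
  "G m Z kappa r = {(P, L). P \<in> Cr kappa r \<rightarrow>\<^sub>E {0..m} \<and> L \<in> Cr kappa r \<rightarrow>\<^sub>E {..<Z} \<and>
     (\<forall>i1 i2 j1 j2. i1 < i2 \<and> j1 < j2 \<and> j2 < kappa \<and> i2*kappa + j2 < r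
        \<longrightarrow> \<not> active4 Z P L i1 i2 j1 j2)}"

lemma Cr_finite: "finite (Cr kappa r)"
proof -
  have "Cr kappa r \<subseteq> {..<r} \<times> {..<kappa}"
  proof
    fix x assume "x \<in> Cr kappa r"
    then obtain i j where x: "x = (i,j)" "j < kappa" "i*kappa+j < r" by (auto simp: Cr_def)
    then have "i * 1 \<le> i*kappa" by (intro mult_le_mono2) simp
    then have "i < r" using x by linarith
    with x show "x \<in> {..<r} \<times> {..<kappa}" by auto
  qed
  then show ?thesis by (rule finite_subset) auto
qed

lemma G_finite: "finite (G m Z kappa r)"
proof -
  have "G m Z kappa r \<subseteq> (Cr kappa r \<rightarrow>\<^sub>E {0..m}) \<times> (Cr kappa r \<rightarrow>\<^sub>E {..<Z})"
    by (auto simp: G_def)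
  then show ?thesis by (rule finite_subset) (auto intro!: finite_PiE Cr_finite)
qed

lemma Cr_Suc: assumes "kappa > 0"
  shows "Cr kappa (Suc r) = insert (r div kappa, r mod kappa) (Cr kappa r)"
    and "(r div kappa, r mod kappa) \<notin> Cr kappa r"
proof -
  show "Cr kappa (Suc r) = insert (r div kappa, r mod kappa) (Cr kappa r)"
  proof (rule set_eqI, clarify)
    fix i j
    show "((i,j) \<in> Cr kappa (Suc r)) = ((i,j) \<in> insert (r div kappa, r mod kappa) (Cr kappa r))"
    proof
      assume "(i,j) \<in> Cr kappa (Suc r)"
      then have h: "j < kappa" "i*kappa+j < Suc r" by (auto simp: Cr_def)
      show "(i,j) \<in> insert (r div kappa, r mod kappa) (Cr kappa r)"
      proof (cases "i*kappa+j = r")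
        case True
        then have "r div kappa = i" "r mod kappa = j" using h(1) by auto
        then show ?thesis by simp
      qed (use h in \<open>auto simp: Cr_def\<close>)
    next
      assume "(i,j) \<in> insert (r div kappa, r mod kappa) (Cr kappa r)"
      then show "(i,j) \<in> Cr kappa (Suc r)"
        using assms by (auto simp: Cr_def)
    qed
  qed
  show "(r div kappa, r mod kappa) \<notin> Cr kappa r" by (auto simp: Cr_def)
qed

lemma G_step:
  assumes kp: "kappa > 0"
  shows "card (G m Z kappa (Suc r)) \<ge> card (G m Z kappa r) * ((m+1)*Z - (r div kappa)*(r mod kappa))"
proof -
  define i where "i = r div kappa"
  define j where "j = r mod kappa"
  define c where "c = (i, j)"
  have jk: "j < kappa" using kp by (simp add: j_def)
  have rij: "i*kappa + j = r" by (simp add: i_def j_def)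
  have CS: "Cr kappa (Suc r) = insert c (Cr kappa r)" and cn: "c \<notin> Cr kappa r"
    using Cr_Suc[OF kp, of r] by (auto simp: c_def i_def j_def)
  define V where "V = (\<lambda>(P::nat\<times>nat\<Rightarrow>nat, L::nat\<times>nat\<Rightarrow>nat). {(a,b). a \<in> {0..m} \<and> b \<in> {..<Z} \<and>
      (\<forall>i1 j1. i1 < i \<and> j1 < j \<longrightarrow> \<not> active4 Z (P(c:=a)) (L(c:=b)) i1 i j1 j)})"
  define ext where "ext = (\<lambda>((P::nat\<times>nat\<Rightarrow>nat, L::nat\<times>nat\<Rightarrow>nat), (a::nat, b::nat)). (P(c:=a), L(c:=b)))"
  have Vcard: "card (V x) \<ge> (m+1)*Z - i*j" if "x \<in> G m Z kappa r" for x
  proof -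
    obtain P L where x: "x = (P, L)" by force
    define bad where "bad = (\<lambda>(i1,j1). (P(i1,j)+P(i,j1)-P(i1,j1),
        nat ((int (L(i1,j)) + int (L(i,j1)) - int (L(i1,j1))) mod int Z)))"
    define Bad where "Bad = bad ` ({..<i} \<times> {..<j})"
    have cB: "card Bad \<le> i*j"
      unfolding Bad_def using card_image_le[of "{..<i} \<times> {..<j}" bad] by (simp add: card_cartesian_product)
    have sub: "({0..m} \<times> {..<Z}) - Bad \<subseteq> V x"
    proof
      fix y assume y: "y \<in> ({0..m} \<times> {..<Z}) - Bad"
      obtain a b where yab: "y = (a,b)" by force
      have ab: "(a,b) \<in> {0..m} \<times> {..<Z}" "(a,b) \<notin> Bad" using y yab by auto
      show "y \<in> V x"
        unfolding x V_def yab
      proof (simp add: ab[simplified], intro allI impI notI)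
        fix i1 j1 assume ij: "i1 < i \<and> j1 < j" and act: "active4 Z (P(c := a)) (L(c := b)) i1 i j1 j"
        have ne: "(i1,j1) \<noteq> c" "(i1,j) \<noteq> c" "(i,j1) \<noteq> c" using ij by (auto simp: c_def)
        from act ne have e1: "P (i1,j1) + a = P (i1,j) + P (i,j1)"
          and e2: "(L (i1,j1) + b) mod Z = (L (i1,j) + L (i,j1)) mod Z"
          by (auto simp: active4_def c_def)
        have a: "a = P(i1,j)+P(i,j1)-P(i1,j1)" using e1 by simp
        have "int b = int b mod int Z" using ab by simp
        also have "\<dots> = (int (L (i1,j1)) + int b - int (L(i1,j1))) mod int Z" by simp
        also have "\<dots> = (int (L (i1,j)) + int (L(i,j1)) - int (L(i1,j1))) mod int Z"
        proof -
          have "int ((L (i1,j1) + b) mod Z) = int ((L (i1,j) + L (i,j1)) mod Z)" using e2 by simp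
          then have "(int (L (i1,j1)) + int b) mod int Z = (int (L (i1,j)) + int (L(i,j1))) mod int Z"
            by (simp add: zmod_int)
          then show ?thesis by (metis mod_diff_cong)
        qed
        finally have b: "b = nat ((int (L(i1,j)) + int (L(i,j1)) - int (L(i1,j1))) mod int Z)" by simp
        have "(a,b) \<in> Bad" unfolding Bad_def bad_def using ij a b by (auto intro!: image_eqI[where x="(i1,j1)"])
        with ab show False by simp
      qed
    qed
    have finV: "finite (V x)" unfolding x V_def
      by (rule finite_subset[of _ "{0..m} \<times> {..<Z}"]) auto
    have "(m+1)*Z - i*j \<le> card ({0..m} \<times> {..<Z}) - card Bad"
      using cB by (simp add: card_cartesian_product)
    also have "\<dots> \<le> card (({0..m} \<times> {..<Z}) - Bad)"
      by (rule diff_card_le_card_Diff) (simp add: Bad_def)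
    also have "\<dots> \<le> card (V x)" by (rule card_mono[OF finV sub])
    finally show ?thesis .
  qed
  have inj: "inj_on ext (Sigma (G m Z kappa r) V)"
  proof (rule inj_onI)
    fix x y assume hx: "x \<in> Sigma (G m Z kappa r) V" and hy: "y \<in> Sigma (G m Z kappa r) V"
      and he: "ext x = ext y"
    obtain P L a b where x: "x = ((P,L),(a,b))" by (metis prod.collapse)
    obtain P' L' a' b' where y: "y = ((P',L'),(a',b'))" by (metis prod.collapse)
    have h: "((P, L), a, b) \<in> Sigma (G m Z kappa r) V" "((P', L'), a', b') \<in> Sigma (G m Z kappa r) V"
      "ext ((P, L), a, b) = ext ((P', L'), a', b')" using hx hy he x y by auto
    then have u: "P(c:=a) = P'(c:=a')" "L(c:=b) = L'(c:=b')" by (auto simp: ext_def)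
    have ab: "a = a'" "b = b'" using fun_cong[OF u(1), of c] fun_cong[OF u(2), of c] by auto
    have PP: "P \<in> Cr kappa r \<rightarrow>\<^sub>E {0..m}" "P' \<in> Cr kappa r \<rightarrow>\<^sub>E {0..m}"
      "L \<in> Cr kappa r \<rightarrow>\<^sub>E {..<Z}" "L' \<in> Cr kappa r \<rightarrow>\<^sub>E {..<Z}"
      using h by (auto simp: G_def)
    have "P = P'"
      by (rule PiE_ext[OF PP(1,2)]) (metis cn fun_upd_other u(1))
    moreover have "L = L'"
      by (rule PiE_ext[OF PP(3,4)]) (metis cn fun_upd_other u(2))
    ultimately show "x = y" using ab x y by simp
  qed
  have img: "ext ` (Sigma (G m Z kappa r) V) \<subseteq> G m Z kappa (Suc r)"
  proof
    fix z assume "z \<in> ext ` (Sigma (G m Z kappa r) V)"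
    then obtain w where w: "w \<in> Sigma (G m Z kappa r) V" "z = ext w" by blast
    obtain P L a b where wz: "w = ((P,L),(a,b))" by (metis prod.collapse)
    have z: "z = ext ((P,L),(a,b))" and h: "(P, L) \<in> G m Z kappa r" "(a, b) \<in> V (P, L)"
      using w wz by auto
    have PL: "P \<in> Cr kappa r \<rightarrow>\<^sub>E {0..m}" "L \<in> Cr kappa r \<rightarrow>\<^sub>E {..<Z}"
      and noact: "\<And>i1 i2 j1 j2. i1 < i2 \<Longrightarrow> j1 < j2 \<Longrightarrow> j2 < kappa \<Longrightarrow> i2*kappa + j2 < r
        \<Longrightarrow> \<not> active4 Z P L i1 i2 j1 j2"
    proof -
      have "P \<in> Cr kappa r \<rightarrow>\<^sub>E {0..m} \<and> L \<in> Cr kappa r \<rightarrow>\<^sub>E {..<Z} \<and>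
        (\<forall>i1 i2 j1 j2. i1 < i2 \<and> j1 < j2 \<and> j2 < kappa \<and> i2*kappa + j2 < r
        \<longrightarrow> \<not> active4 Z P L i1 i2 j1 j2)" using h(1) unfolding G_def by simp
      then show "P \<in> Cr kappa r \<rightarrow>\<^sub>E {0..m}" "L \<in> Cr kappa r \<rightarrow>\<^sub>E {..<Z}"
        "\<And>i1 i2 j1 j2. i1 < i2 \<Longrightarrow> j1 < j2 \<Longrightarrow> j2 < kappa \<Longrightarrow> i2*kappa + j2 < r
        \<Longrightarrow> \<not> active4 Z P L i1 i2 j1 j2" by blast+
    qed
    have ab: "a \<in> {0..m}" "b \<in> {..<Z}"
      and Vc: "\<And>i1 j1. i1 < i \<Longrightarrow> j1 < j \<Longrightarrow> \<not> active4 Z (P(c:=a)) (L(c:=b)) i1 i j1 j"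
    proof -
      have "a \<in> {0..m} \<and> b \<in> {..<Z} \<and>
      (\<forall>i1 j1. i1 < i \<and> j1 < j \<longrightarrow> \<not> active4 Z (P(c:=a)) (L(c:=b)) i1 i j1 j)"
        using h(2) unfolding V_def by simp
      then show "a \<in> {0..m}" "b \<in> {..<Z}" "\<And>i1 j1. i1 < i \<Longrightarrow> j1 < j \<Longrightarrow> \<not> active4 Z (P(c:=a)) (L(c:=b)) i1 i j1 j"
        by blast+
    qed
    have "P(c:=a) \<in> Cr kappa (Suc r) \<rightarrow>\<^sub>E {0..m}" unfolding CS by (rule PiE_fun_upd[OF ab(1) PL(1)])
    moreover have "L(c:=b) \<in> Cr kappa (Suc r) \<rightarrow>\<^sub>E {..<Z}" unfolding CS by (rule PiE_fun_upd[OF ab(2) PL(2)])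
    moreover have "\<not> active4 Z (P(c:=a)) (L(c:=b)) i1 i2 j1 j2"
      if q: "i1 < i2" "j1 < j2" "j2 < kappa" "i2*kappa + j2 < Suc r" for i1 i2 j1 j2
    proof (cases "i2*kappa + j2 = r")
      case True
      have "(i2*kappa+j2) div kappa = i2" "(i2*kappa+j2) mod kappa = j2" using q(3) by simp_all
      then have "i2 = i" "j2 = j" using True unfolding i_def j_def by simp_all
      then show ?thesis using Vc q by simp
    next
      case False
      then have lt: "i2*kappa + j2 < r" using q by simp
      have "i1*kappa + j1 < r" "i1*kappa + j2 < r" "i2*kappa + j1 < r"
      proof -
        have "i1*kappa \<le> i2*kappa" using q by simp
        then show "i1*kappa + j1 < r" "i1*kappa + j2 < r" "i2*kappa + j1 < r" using lt q by linarith+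
      qed
      then have ne: "(i1,j1) \<noteq> c" "(i1,j2) \<noteq> c" "(i2,j1) \<noteq> c" "(i2,j2) \<noteq> c"
        using lt rij unfolding c_def by auto
      have "active4 Z (P(c:=a)) (L(c:=b)) i1 i2 j1 j2 = active4 Z P L i1 i2 j1 j2"
        unfolding active4_def using ne by simp
      then show ?thesis using noact[OF q(1,2,3) lt] by simp
    qed
    ultimately have "(P(c:=a), L(c:=b)) \<in> G m Z kappa (Suc r)"
      unfolding G_def mem_Collect_eq case_prod_conv by (intro conjI allI impI) auto
    then show "z \<in> G m Z kappa (Suc r)" unfolding z ext_def by simp
  qed
  have finS: "finite (Sigma (G m Z kappa r) V)"
  proof -
    have "\<forall>x. finite (V x)" unfolding V_def
      by (auto intro: finite_subset[of _ "{0..m} \<times> {..<Z}"])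
    then show ?thesis using G_finite by auto
  qed
  have "card (G m Z kappa r) * ((m+1)*Z - i*j) = (\<Sum>x\<in>G m Z kappa r. (m+1)*Z - i*j)" by simp
  also have "\<dots> \<le> (\<Sum>x\<in>G m Z kappa r. card (V x))" by (rule sum_mono) (rule Vcard)
  also have "\<dots> = card (Sigma (G m Z kappa r) V)"
    by (rule card_SigmaI[symmetric]) (auto simp: G_finite V_def intro: finite_subset[of _ "{0..m} \<times> {..<Z}"])
  also have "\<dots> = card (ext ` Sigma (G m Z kappa r) V)" by (rule card_image[OF inj, symmetric])
  also have "\<dots> \<le> card (G m Z kappa (Suc r))" by (rule card_mono[OF G_finite img])
  finally show ?thesis by (simp add: i_def j_def)
qed

lemma G_iter:
  assumes kp: "kappa > 0"
  shows "card (G m Z kappa r) \<ge> (\<Prod>s<r. (m+1)*Z - (s div kappa)*(s mod kappa))"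
proof (induction r)
  case 0
  have "G m Z kappa 0 = {(\<lambda>_. undefined, \<lambda>_. undefined)}"
    by (auto simp: G_def Cr_def)
  then show ?case by simp
next
  case (Suc r)
  have "(\<Prod>s<Suc r. (m+1)*Z - (s div kappa)*(s mod kappa))
      = (\<Prod>s<r. (m+1)*Z - (s div kappa)*(s mod kappa)) * ((m+1)*Z - (r div kappa)*(r mod kappa))"
    by simp
  also have "\<dots> \<le> card (G m Z kappa r) * ((m+1)*Z - (r div kappa)*(r mod kappa))"
    using Suc.IH by (rule mult_right_mono) simp
  also have "\<dots> \<le> card (G m Z kappa (Suc r))" by (rule G_step[OF kp])
  finally show ?case .
qed

lemma G_full:
  assumes "kappa > 0"
  shows "G m Z kappa (gamma*kappa) = good_pairs m Z gamma kappa"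
proof -
  have C: "Cr kappa (gamma*kappa) = {..<gamma} \<times> {..<kappa}"
  proof (rule set_eqI, clarify)
    fix i j
    show "((i,j) \<in> Cr kappa (gamma*kappa)) = ((i,j) \<in> {..<gamma} \<times> {..<kappa})"
    proof
      assume "(i,j) \<in> Cr kappa (gamma*kappa)"
      then have h: "j < kappa" "i*kappa + j < gamma*kappa" by (auto simp: Cr_def)
      then have "i*kappa < gamma*kappa" by linarith
      then have "i < gamma" by simp
      then show "(i,j) \<in> {..<gamma} \<times> {..<kappa}" using h by simp
    next
      assume "(i,j) \<in> {..<gamma} \<times> {..<kappa}"
      then have h: "i < gamma" "j < kappa" by auto
      then have "Suc i * kappa \<le> gamma * kappa" by (intro mult_right_mono) auto
      then show "(i,j) \<in> Cr kappa (gamma*kappa)" using h by (auto simp: Cr_def)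
    qed
  qed
  have E: "(i2 < gamma \<and> j2 < kappa) = (j2 < kappa \<and> i2*kappa + j2 < gamma*kappa)" for i2 j2
  proof -
    have "((i2,j2) \<in> Cr kappa (gamma*kappa)) = ((i2,j2) \<in> {..<gamma} \<times> {..<kappa})" using C by simp
    then show ?thesis by (simp add: Cr_def)
  qed
  have Q: "(i1 < i2 \<and> j1 < j2 \<and> j2 < kappa \<and> i2*kappa + j2 < gamma*kappa) = (i1 < i2 \<and> i2 < gamma \<and> j1 < j2 \<and> j2 < kappa)" for i1 i2 j1 j2
    using E[of i2 j2] by blast
  show ?thesis unfolding G_def C Q good_pairs_def by (rule refl)
qed



lemma bern_inv: fixes y :: real assumes "0 \<le> y" "y \<le> 1"
  shows "(1-y)^t * (1 + real t * y) \<le> 1"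
proof (induction t)
  case 0 then show ?case by simp
next
  case (Suc t)
  have nn: "0 \<le> (1-y)^t" using assms by simp
  have le: "(1-y)*(1 + real (Suc t) * y) \<le> 1 + real t * y"
    using assms by (simp add: algebra_simps)
  then have "(1-y)^Suc t * (1 + real (Suc t) * y) \<le> (1-y)^t * (1 + real t * y)"
  proof -
    have "(1-y)^Suc t * (1 + real (Suc t) * y) = (1-y)^t * ((1-y)*(1 + real (Suc t) * y))"
      by (simp add: mult.assoc mult.left_commute)
    also have "\<dots> \<le> (1-y)^t * (1 + real t * y)" by (rule mult_left_mono[OF le nn])
    finally show ?thesis .
  qed
  then show ?case using Suc.IH by linarith
qed

lemma sum_split_add: "(\<Sum>s<a+n. f s) = (\<Sum>s<a. f s) + (\<Sum>j<n. f (a+j))" for f :: "nat \<Rightarrow> nat"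
  by (induction n) simp_all

lemma sum_divmod: assumes "0 < (kappa::nat)"
  shows "(\<Sum>s<g*kappa. (s div kappa)*(s mod kappa)) = (\<Sum>i<g. i) * (\<Sum>j<kappa. j)"
proof (induction g)
  case 0 then show ?case by simp
next
  case (Suc g)
  have "(\<Sum>s<Suc g*kappa. (s div kappa)*(s mod kappa)) =
     (\<Sum>s<g*kappa. (s div kappa)*(s mod kappa)) + (\<Sum>j<kappa. ((g*kappa+j) div kappa)*((g*kappa+j) mod kappa))"
    using sum_split_add[of "\<lambda>s. (s div kappa)*(s mod kappa)" "g*kappa" kappa] by (simp add: add.commute)
  also have "(\<Sum>j<kappa. ((g*kappa+j) div kappa)*((g*kappa+j) mod kappa)) = (\<Sum>j<kappa. g*j)"
    by (rule sum.cong) auto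
  also have "\<dots> = g * (\<Sum>j<kappa. j)" by (simp add: sum_distrib_left)
  finally show ?case using Suc.IH by (simp add: algebra_simps)
qed

lemma sum_lt_choose: "(\<Sum>i<n. i) = n choose 2"
  using Sum_Ico_nat[of 0 n] by (simp add: choose_two lessThan_atLeast0)

lemma I_bound:
  fixes D :: nat assumes "D \<ge> 2"
  shows "(real D - 1) ^ (D - 1) / real D ^ D \<le> 1 / (2 * real D - 1)"
proof -
  define y where "y = 1 / real D"
  have y: "0 \<le> y" "y \<le> 1" using assms by (auto simp: y_def)
  have B: "(1-y)^(D-1) * (1 + real (D-1) * y) \<le> 1" by (rule bern_inv[OF y])
  have e1: "(real D - 1) ^ (D - 1) / real D ^ D = (1/real D) * (1-y)^(D-1)"
  proof -
    have "real D ^ D = real D * real D ^ (D-1)" using assms by (metis Suc_diff_1 le_trans not_le not_numeral_le_zero power_Suc zero_less_iff_neq_zero) 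
    moreover have "(1-y)^(D-1) = (real D - 1)^(D-1) / real D^(D-1)"
      using assms by (simp add: y_def power_divide[symmetric] diff_divide_distrib)
    ultimately show ?thesis by simp
  qed
  have e2: "1 + real (D-1) * y = (2 * real D - 1) / real D"
    using assms by (simp add: y_def of_nat_diff field_simps)
  have pos: "0 < 2 * real D - 1" using assms by simp
  define X where "X = (1-y)^(D-1)"
  have B': "X * ((2 * real D - 1) / real D) \<le> 1" using B e2 by (simp add: X_def)
  have "X * (2 * real D - 1) = (X * ((2 * real D - 1) / real D)) * real D" using assms by simp
  also have "\<dots> \<le> 1 * real D" by (rule mult_right_mono[OF B']) simp
  finally have "X * (2 * real D - 1) \<le> real D" by simp
  then have "(1-y)^(D-1) \<le> real D / (2 * real D - 1)"
    using pos by (simp add: X_def pos_le_divide_eq)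
  then have "(1/real D) * (1-y)^(D-1) \<le> (1/real D) * (real D / (2 * real D - 1))"
    by (rule mult_left_mono) simp
  also have "\<dots> = 1 / (2 * real D - 1)" using assms by simp
  finally show ?thesis using e1 by simp
qed



lemma real_diff_ge: "real A - real t \<le> real (A - t)"
  by (cases "t \<le> A") (auto simp: of_nat_diff)

theorem corollary1:
  fixes m Z gamma kappa :: nat
  assumes "Z \<ge> 1" and "gamma \<ge> 2" and "kappa \<ge> 2"
    and "gamma * kappa > gamma + kappa"
  defines "\<Delta> \<equiv> real ((2 * gamma - 3) * (2 * kappa - 3))"
  defines "I \<equiv> (\<Delta> - 1) ^ ((2 * gamma - 3) * (2 * kappa - 3) - 1) / \<Delta> ^ ((2 * gamma - 3) * (2 * kappa - 3))"
  defines "II \<equiv> 27 / (256 * real (gamma * kappa - gamma - kappa))"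
  assumes "(2 * real m ^ 2 + 4 * real m + 3) / (3 * (real m + 1) ^ 3 * real Z) \<le> max I II"
  shows "real (card (good_pairs m Z gamma kappa)) \<ge>
           (real Z * (real m + 1)) ^ (gamma * kappa) *
           (if I > II
            then (1 - 2 / \<Delta>) ^ ((gamma choose 2) * (kappa choose 2))
            else (1 - real (gamma * kappa - gamma - kappa + 1)
                        / (4 * real (gamma * kappa - gamma - kappa))) ^ (gamma * kappa))"
proof -
  obtain a b where ab: "gamma = a + 2" "kappa = b + 2"
    using assms(2,3) by (metis add.commute le_Suc_ex)
  have kp: "kappa > 0" using assms(3) by simp
  define A where "A = (m+1)*Z"
  define Ar where "Ar = real Z * (real m + 1)"
  have ArA: "Ar = real A" by (simp add: A_def Ar_def algebra_simps)
  have Arpos: "Ar > 0" using assms(1) by (simp add: Ar_def)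
  define t where "t s = (s div kappa)*(s mod kappa)" for s
  define T where "T = (gamma - 1)*(kappa - 1)"
  define N where "N = gamma*kappa"
  have tT: "t s \<le> T" if "s < N" for s
  proof -
    have "s div kappa < gamma" using that kp by (simp add: N_def div_less_iff_less_mult)
    moreover have "s mod kappa < kappa" using kp by simp
    ultimately show ?thesis unfolding t_def T_def by (intro mult_le_mono) auto
  qed
  have cardge: "(\<Prod>s<N. A - t s) \<le> card (good_pairs m Z gamma kappa)"
    using G_iter[OF kp, of m Z N] G_full[OF kp, of m Z gamma] by (simp add: N_def A_def t_def)
  have prodbound: "(\<Prod>s<N. w s) \<le> real (card (good_pairs m Z gamma kappa))"
    if w: "\<And>s. s < N \<Longrightarrow> 0 \<le> w s \<and> w s \<le> Ar - real (t s)" for w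
  proof -
    have "(\<Prod>s<N. w s) \<le> (\<Prod>s<N. real (A - t s))"
    proof (rule prod_mono)
      fix s assume "s \<in> {..<N}"
      then show "0 \<le> w s \<and> w s \<le> real (A - t s)" using w[of s] real_diff_ge[of A "t s"] ArA by auto
    qed
    also have "\<dots> = real (\<Prod>s<N. A - t s)" by simp
    also have "\<dots> \<le> real (card (good_pairs m Z gamma kappa))" using cardge by linarith
    finally show ?thesis .
  qed
  define M where "M = max I II"
  have pM: "2 \<le> 3 * Ar * M"
  proof -
    have e: "(2 * real m ^ 2 + 4 * real m + 3) / (3 * (real m + 1) ^ 3 * real Z)
        = (2 * real m ^ 2 + 4 * real m + 3) / (3 * (real m + 1) ^ 2 * Ar)"
      by (simp add: Ar_def power3_eq_cube power2_eq_square mult_ac)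
    have "2 / (3 * Ar) \<le> (2 * real m ^ 2 + 4 * real m + 3) / (3 * (real m + 1) ^ 2 * Ar)"
    proof -
      have "2 / (3 * Ar) = (2 * (real m + 1)^2) / (3 * (real m + 1) ^ 2 * Ar)" by simp
      also have "\<dots> \<le> (2 * real m ^ 2 + 4 * real m + 3) / (3 * (real m + 1) ^ 2 * Ar)"
        by (rule divide_right_mono) (use Arpos in \<open>auto simp: power2_eq_square algebra_simps\<close>)
      finally show ?thesis .
    qed
    moreover have "(2 * real m ^ 2 + 4 * real m + 3) / (3 * (real m + 1) ^ 2 * Ar) \<le> M"
      using assms(8) unfolding M_def by (simp only: e)
    ultimately have "2 / (3 * Ar) \<le> M" by (rule order_trans)
    then show ?thesis using Arpos by (simp add: divide_le_eq mult_ac)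
  qed
  show ?thesis
  proof (cases "I > II")
    case True
    then have MI: "M = I" by (simp add: M_def)
    define D where "D = (2 * gamma - 3) * (2 * kappa - 3)"
    have Dab: "D = (2*a+1)*(2*b+1)" and Tab: "T = (a+1)*(b+1)" by (simp_all add: D_def T_def ab)
    have abnz: "a*b + a + b > 0" using assms(4) by (simp add: ab algebra_simps)
    have D3: "D \<ge> 3" unfolding Dab using abnz
      by (cases a; cases b) (auto simp: algebra_simps)
    have Del: "\<Delta> = real D" by (simp add: \<Delta>_def D_def)
    have key: "real D + 2 * real T \<le> 2 * Ar"
    proof (cases "(a = 0 \<and> b = 1) \<or> (a = 1 \<and> b = 0)")
      case True
      then have "D = 3" "T = 2" unfolding Dab Tab by auto
      moreover have hI: "I = 4/27" using True unfolding I_def \<Delta>_def ab by (auto simp: numeral_eq_Suc)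
      moreover have h2: "2 \<le> 3*Ar*I" using pM MI by simp
      moreover have "2 \<le> 3*Ar*(4/27)" using h2 unfolding hI .
      ultimately show ?thesis by simp
    next
      case False
      have "5 \<le> 14*a*b + 4*a + 4*b" using False abnz
        by (cases a; cases b) (auto simp: algebra_simps)
      then have n: "6*T + 4 \<le> 5*D" unfolding Tab Dab by (simp add: algebra_simps)
      have "I \<le> 1 / (2 * real D - 1)" unfolding I_def Del D_def[symmetric]
        using I_bound[of D] D3 by simp
      then have "3 * Ar * I \<le> 3 * Ar * (1 / (2 * real D - 1))"
        by (rule mult_left_mono) (use Arpos in simp)
      then have "2 \<le> 3 * Ar / (2 * real D - 1)" using pM MI by simp
      then have "2 * (2 * real D - 1) \<le> 3 * Ar" using D3 by (simp add: le_divide_eq)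
      moreover have "6 * real T + 4 \<le> 5 * real D" using n by linarith
      ultimately show ?thesis by (smt (verit))
    qed
    define y where "y = 2 / \<Delta>"
    have y01: "0 \<le> y" "y \<le> 1" using D3 by (auto simp: y_def Del)
    have w: "0 \<le> Ar * (1-y)^(t s) \<and> Ar * (1-y)^(t s) \<le> Ar - real (t s)" if "s < N" for s
    proof
      show "0 \<le> Ar * (1-y)^(t s)" using Arpos y01 by simp
      define tt where "tt = real (t s)"
      have ttT: "tt \<le> real T" using tT[OF that] by (simp add: tt_def)
      have tt0: "0 \<le> tt" by (simp add: tt_def)
      have Ay: "1 + tt * y \<le> Ar * y"
      proof -
        have "(real D + 2 * tt) / real D \<le> (2 * Ar) / real D"
          by (rule divide_right_mono) (use key ttT in auto)
        then show ?thesis using D3 by (simp add: y_def Del add_divide_distrib mult_ac)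
      qed
      have Att: "0 \<le> Ar - tt" using key ttT by simp
      have "Ar \<le> (Ar - tt) * (1 + tt * y)"
      proof -
        have "(Ar - tt) * (1 + tt * y) - Ar = tt * (Ar * y - 1 - tt * y)" by (simp add: algebra_simps)
        moreover have "0 \<le> tt * (Ar * y - 1 - tt * y)" using Ay tt0 by simp
        ultimately show ?thesis by linarith
      qed
      then have "Ar * (1-y)^(t s) \<le> ((Ar - tt) * (1 + tt * y)) * (1-y)^(t s)"
        by (rule mult_right_mono) (use y01 in simp)
      also have "\<dots> = (Ar - tt) * ((1-y)^(t s) * (1 + real (t s) * y))" by (simp add: tt_def mult_ac)
      also have "\<dots> \<le> (Ar - tt) * 1" by (rule mult_left_mono[OF bern_inv[OF y01] Att])
      finally show "Ar * (1-y)^(t s) \<le> Ar - real (t s)" by (simp add: tt_def)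
    qed
    have "(\<Prod>s<N. Ar * (1-y)^(t s)) = Ar ^ N * (1-y)^(\<Sum>s<N. t s)"
      by (simp add: prod.distrib power_sum)
    also have "(\<Sum>s<N. t s) = (gamma choose 2) * (kappa choose 2)"
      unfolding N_def t_def using sum_divmod[OF kp, of gamma] by (simp add: sum_lt_choose)
    finally have "Ar ^ N * (1-y)^((gamma choose 2) * (kappa choose 2)) \<le> real (card (good_pairs m Z gamma kappa))"
      using prodbound[of "\<lambda>s. Ar * (1-y)^(t s)"] w by simp
    then show ?thesis using True by (simp add: Ar_def N_def y_def)
  next
    case False
    then have MII: "M = II" by (simp add: M_def)
    define kk where "kk = gamma * kappa - gamma - kappa"
    have kk1: "kk \<ge> 1" using assms(4) by (simp add: kk_def)
    have Tk: "T = kk + 1" unfolding T_def kk_def ab by (simp add: algebra_simps)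
    have "2 \<le> 3 * Ar * (27 / (256 * real kk))" using pM MII by (simp add: II_def kk_def)
    then have "512 * real kk \<le> 81 * Ar" using kk1 by (simp add: field_simps)
    then have A4: "4 * real kk \<le> Ar" using kk1 by linarith
    define bb where "bb = 1 - real (kk + 1) / (4 * real kk)"
    have bb0: "0 \<le> bb"
    proof -
      have "real (kk+1) \<le> 4 * real kk" using kk1 by simp
      then show ?thesis using kk1 by (simp add: bb_def divide_le_eq)
    qed
    have Abb: "Ar * bb \<le> Ar - real (kk + 1)"
    proof -
      have "real (kk+1) * 1 \<le> real (kk+1) * (Ar / (4 * real kk))"
        by (rule mult_left_mono) (use A4 kk1 in \<open>auto simp: le_divide_eq\<close>)
      then show ?thesis by (simp add: bb_def algebra_simps)
    qed
    have w: "0 \<le> Ar * bb \<and> Ar * bb \<le> Ar - real (t s)" if "s < N" for s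
      using tT[OF that] Tk Abb bb0 Arpos by auto
    have "(\<Prod>s<N. Ar * bb) = Ar ^ N * bb ^ N" by (simp add: power_mult_distrib)
    then have "Ar ^ N * bb ^ N \<le> real (card (good_pairs m Z gamma kappa))"
      using prodbound[of "\<lambda>s. Ar * bb"] w by simp
    then show ?thesis using False by (simp add: Ar_def N_def bb_def kk_def)
  qed
qed

end
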